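(* Let $\mathcal{X}$ be a finite channel input set with $|\mathcal{X}|=M=2^m$, let $\mathcal{Y}$ be the output set, and let $P_{Y|X}(y|x)$ be the transition density of a memoryless channel. Let $\mu:\mathbb{F}_2^m\to\mathcal{X}$ be a bijective labeling, and for $x\in\mathcal{X}$ and $j=1,\dots,m$ let $b_j(x)\in\{0,1\}$ be the $j$-th bit of the label of $x$. For $b\in\{0,1\}$ let $\mathcal{X}_b^j=\{x\in\mathcal{X}: b_j(x)=b\}$. Let $P_{B_1},\dots,P_{B_m}$ be probability distributions on $\{0,1\}$ and define $P_X^{\rm bicm}(x)=\prod_{j=1}^m P_{B_j}(b_j(x))$. Define the bit metrics $$q_j(b,y)=\sum_{x'\in\mathcal{X}_b^j}P_{Y|X}(y|x')P_X^{\rm bicm}(x'),$$ the symbol metric $q^{\rm bicm}(x,y)=\prod_{j=1}^m q_j(b_j(x),y)$, and the generalized mutual information $$R_{\rm gmi}=\sup_{s>0}\ \mathbb{E}\left[\log\frac{q^{\rm bicm}(X,Y)^s}{\sum_{x'\in\mathcal{X}}q^{\rm bicm}(x',Y)^sP_X^{\rm bicm}(x')}\right],$$ where the expectation is with respect to the joint distribution $P_X^{\rm bicm}(x)P_{Y|X}(y|x)$. Then $$R_{\rm gmi}=\sup_{s>0}\left(\sum_{j=1}^m\mathbb{E}\left[\log\frac{q_j(B_j,Y)^s}{\sum_{b'\in\{0,1\}}q_j(b',Y)^sP_{B_j}(b')}\right]\right),$$ where, for each $j$, the expectation is with respect to the joint distribution $P_{B_j}(b)P_j(y|b)$ with $$P_j(y|b)=\sum_{x\in\mathcal{X}_b^j}\frac{P_{Y|X}(y|x)P_X^{\rm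 bicm}(x)}{\sum_{x'\in\mathcal{X}_b^j}P_X^{\rm bicm}(x')}\quad(\text{for } b \text{ with } P_{B_j}(b)>0).$$ Equivalently, $$R_{\rm gmi}=\sup_{s>0}\left(\sum_{j=1}^m\mathbb{E}\left[\log\frac{q_j(b_j(X),Y)^s}{\sum_{b'\in\{0,1\}}q_j(b',Y)^sP_{B_j}(b')}\right]\right),$$ where the expectation is with respect to $P_X^{\rm bicm}(x)P_{Y|X}(y|x)$.
   Context: This is the setting of bit-interleaved coded modulation (BICM) with possibly non-equiprobable ("shaped") bits: the $m$ label bits of each transmitted symbol are independent with distributions $P_{B_j}$, and the decoder uses the metric $q^{\rm bicm}$, which treats the bits as independent. Logarithms are natural. *)

theory Defs
  imports "HOL-Probability.Probability"
begin

text \<open>Bit-label vectors in F_2^m: functions {1..m} -> bool (True = bit 1), extensional.\<close>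
definition bitvecs :: "nat \<Rightarrow> (nat \<Rightarrow> bool) set" where
  "bitvecs m = ({1..m} \<rightarrow>\<^sub>E (UNIV :: bool set))"

definition lbit :: "nat \<Rightarrow> ((nat \<Rightarrow> bool) \<Rightarrow> 'x) \<Rightarrow> nat \<Rightarrow> 'x \<Rightarrow> bool" where
  "lbit m mu j x = the_inv_into (bitvecs m) mu x j"

definition Xbj :: "'x set \<Rightarrow> nat \<Rightarrow> ((nat \<Rightarrow> bool) \<Rightarrow> 'x) \<Rightarrow> nat \<Rightarrow> bool \<Rightarrow> 'x set" where
  "Xbj X m mu j b = {x \<in> X. lbit m mu j x = b}"

definition PXbicm :: "nat \<Rightarrow> ((nat \<Rightarrow> bool) \<Rightarrow> 'x) \<Rightarrow> (nat \<Rightarrow> bool pmf) \<Rightarrow> 'x \<Rightarrow> real" where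
  "PXbicm m mu PB x = (\<Prod>j\<in>{1..m}. pmf (PB j) (lbit m mu j x))"

definition qbit :: "'x set \<Rightarrow> nat \<Rightarrow> ((nat \<Rightarrow> bool) \<Rightarrow> 'x) \<Rightarrow> (nat \<Rightarrow> bool pmf)
    \<Rightarrow> ('x \<Rightarrow> 'y \<Rightarrow> real) \<Rightarrow> nat \<Rightarrow> bool \<Rightarrow> 'y \<Rightarrow> real" where
  "qbit X m mu PB W j b y = (\<Sum>x'\<in>Xbj X m mu j b. W x' y * PXbicm m mu PB x')"

definition qbicm :: "'x set \<Rightarrow> nat \<Rightarrow> ((nat \<Rightarrow> bool) \<Rightarrow> 'x) \<Rightarrow> (nat \<Rightarrow> bool pmf)
    \<Rightarrow> ('x \<Rightarrow> 'y \<Rightarrow> real) \<Rightarrow> 'x \<Rightarrow> 'y \<Rightarrow> real" where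
  "qbicm X m mu PB W x y = (\<Prod>j\<in>{1..m}. qbit X m mu PB W j (lbit m mu j x) y)"

text \<open>P_j(y|b) (division by zero gives 0, i.e. irrelevant when P_Bj(b) = 0)\<close>
definition Pbit :: "'x set \<Rightarrow> nat \<Rightarrow> ((nat \<Rightarrow> bool) \<Rightarrow> 'x) \<Rightarrow> (nat \<Rightarrow> bool pmf)
    \<Rightarrow> ('x \<Rightarrow> 'y \<Rightarrow> real) \<Rightarrow> nat \<Rightarrow> bool \<Rightarrow> 'y \<Rightarrow> real" where
  "Pbit X m mu PB W j b y = (\<Sum>x\<in>Xbj X m mu j b.
       W x y * PXbicm m mu PB x / (\<Sum>x'\<in>Xbj X m mu j b. PXbicm m mu PB x'))"

text \<open>Joint distribution P_X^bicm(x) P_{Y|X}(y|x) on X x Y (N = reference measure on Y).\<close>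
definition joint_sym :: "'x set \<Rightarrow> nat \<Rightarrow> ((nat \<Rightarrow> bool) \<Rightarrow> 'x) \<Rightarrow> (nat \<Rightarrow> bool pmf)
    \<Rightarrow> ('x \<Rightarrow> 'y \<Rightarrow> real) \<Rightarrow> 'y measure \<Rightarrow> ('x \<times> 'y) measure" where
  "joint_sym X m mu PB W N = density (count_space X \<Otimes>\<^sub>M N)
       (\<lambda>(x,y). ennreal (PXbicm m mu PB x * W x y))"

definition joint_bit :: "'x set \<Rightarrow> nat \<Rightarrow> ((nat \<Rightarrow> bool) \<Rightarrow> 'x) \<Rightarrow> (nat \<Rightarrow> bool pmf)
    \<Rightarrow> ('x \<Rightarrow> 'y \<Rightarrow> real) \<Rightarrow> 'y measure \<Rightarrow> nat \<Rightarrow> (bool \<times> 'y) measure" where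
  "joint_bit X m mu PB W N j = density (count_space UNIV \<Otimes>\<^sub>M N)
       (\<lambda>(b,y). ennreal (pmf (PB j) b * Pbit X m mu PB W j b y))"

text \<open>Extended-real expectation: E[f] = E[f^+] - E[f^-], valued in ereal
  (well defined in [-infinity, c] for the integrands here, which are bounded above).\<close>
definition eexpect :: "'a measure \<Rightarrow> ('a \<Rightarrow> real) \<Rightarrow> ereal" where
  "eexpect M f = enn2ereal (\<integral>\<^sup>+ z. ennreal (f z) \<partial>M) - enn2ereal (\<integral>\<^sup>+ z. ennreal (- f z) \<partial>M)"

definition Rgmi :: "'x set \<Rightarrow> nat \<Rightarrow> ((nat \<Rightarrow> bool) \<Rightarrow> 'x) \<Rightarrow> (nat \<Rightarrow> bool pmf)
    \<Rightarrow> ('x \<Rightarrow> 'y \<Rightarrow> real) \<Rightarrow> 'y measure \<Rightarrow> ereal" where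
  "Rgmi X m mu PB W N = (SUP s\<in>{0<..}. eexpect (joint_sym X m mu PB W N)
      (\<lambda>(x,y). ln (qbicm X m mu PB W x y powr s /
         (\<Sum>x'\<in>X. qbicm X m mu PB W x' y powr s * PXbicm m mu PB x'))))"

end

theory Submission
  imports Defs
begin


lemma nn_pair_count:
  assumes fin: "finite A" and sf: "sigma_finite_measure N"
    and meas: "\<And>x. x \<in> A \<Longrightarrow> (\<lambda>y. f (x, y)) \<in> borel_measurable N"
  shows "(\<integral>\<^sup>+ z. f z \<partial>(count_space A \<Otimes>\<^sub>M N)) = (\<Sum>x\<in>A. \<integral>\<^sup>+ y. f (x, y) \<partial>N)"
proof -
  have fm: "f \<in> borel_measurable (count_space A \<Otimes>\<^sub>M N)"
    by (rule measurable_pair_measure_countable1) (use fin meas countable_finite in auto)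
  have "(\<integral>\<^sup>+ z. f z \<partial>(count_space A \<Otimes>\<^sub>M N)) = (\<integral>\<^sup>+ x. \<integral>\<^sup>+ y. f (x, y) \<partial>N \<partial>count_space A)"
    using sigma_finite_measure.nn_integral_fst[OF sf fm] by simp
  also have "\<dots> = (\<Sum>x\<in>A. \<integral>\<^sup>+ y. f (x, y) \<partial>N)"
    by (rule nn_integral_count_space_finite[OF fin])
  finally show ?thesis .
qed



lemma real_pm_identity:
  fixes a :: real and b :: "'j \<Rightarrow> real"
  assumes "finite J" "a = (\<Sum>j\<in>J. b j)"
  shows "ennreal a + (\<Sum>j\<in>J. ennreal (- b j)) = ennreal (- a) + (\<Sum>j\<in>J. ennreal (b j))"
proof -
  have e: "\<And>t::real. ennreal t = ennreal (max t 0)"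
    by (metis ennreal_neg max.absorb1 max.absorb2 nle_le)
  have sm: "(\<Sum>j\<in>J. ennreal (c j)) = ennreal (\<Sum>j\<in>J. max (c j) 0)" for c :: "'j \<Rightarrow> real"
  proof -
    have "(\<Sum>j\<in>J. ennreal (c j)) = (\<Sum>j\<in>J. ennreal (max (c j) 0))"
      by (intro sum.cong refl e)
    also have "\<dots> = ennreal (\<Sum>j\<in>J. max (c j) 0)" by (rule sum_ennreal) simp
    finally show ?thesis .
  qed
  have "ennreal a + (\<Sum>j\<in>J. ennreal (- b j)) = ennreal (max a 0) + ennreal (\<Sum>j\<in>J. max (- b j) 0)"
    by (simp only: sm[of "\<lambda>j. - b j"] e[of a])
  also have "\<dots> = ennreal (max a 0 + (\<Sum>j\<in>J. max (- b j) 0))"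
    by (rule ennreal_plus[symmetric]) (auto intro: sum_nonneg)
  also have "max a 0 + (\<Sum>j\<in>J. max (- b j) 0) = max (- a) 0 + (\<Sum>j\<in>J. max (b j) 0)"
  proof -
    have "(\<Sum>j\<in>J. max (b j) 0) = (\<Sum>j\<in>J. b j + max (- b j) 0)"
      by (intro sum.cong) auto
    also have "\<dots> = a + (\<Sum>j\<in>J. max (- b j) 0)" by (simp add: sum.distrib assms(2))
    finally show ?thesis by auto
  qed
  also have "ennreal (max (- a) 0 + (\<Sum>j\<in>J. max (b j) 0)) = ennreal (max (- a) 0) + ennreal (\<Sum>j\<in>J. max (b j) 0)"
    by (rule ennreal_plus) (auto intro: sum_nonneg)
  also have "\<dots> = ennreal (- a) + (\<Sum>j\<in>J. ennreal (b j))"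
    by (simp only: sm[of "\<lambda>j. b j"] e[of "- a"])
  finally show ?thesis .
qed

lemma fin_minus_top: "(x::ennreal) < \<infinity> \<Longrightarrow> enn2ereal x - enn2ereal y = - \<infinity> \<longleftrightarrow> y = \<infinity>"
proof -
  assume "x < \<infinity>"
  then have "enn2ereal x \<noteq> \<infinity>" by simp
  moreover have "enn2ereal x \<noteq> - \<infinity>" using enn2ereal_nonneg[of x] by auto
  ultimately obtain c where c: "enn2ereal x = ereal c" by (cases "enn2ereal x") auto
  have "ereal c - enn2ereal y = - \<infinity> \<longleftrightarrow> enn2ereal y = \<infinity>"
    using enn2ereal_nonneg[of y] by (cases "enn2ereal y") auto
  then show ?thesis using c by (simp add: infinity_ennreal_def)
qed

lemma eexpect_sum:
  fixes g :: "'a \<Rightarrow> real" and f :: "'j \<Rightarrow> 'a \<Rightarrow> real"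
  assumes fin: "finite J"
    and gm: "g \<in> borel_measurable M" and fm: "\<And>j. j \<in> J \<Longrightarrow> f j \<in> borel_measurable M"
    and ae: "AE z in M. g z = (\<Sum>j\<in>J. f j z)"
    and pos: "\<And>j. j \<in> J \<Longrightarrow> (\<integral>\<^sup>+ z. ennreal (f j z) \<partial>M) < \<infinity>"
  shows "eexpect M g = (\<Sum>j\<in>J. eexpect M (f j))"
proof -
  define Pg where "Pg = (\<integral>\<^sup>+ z. ennreal (g z) \<partial>M)"
  define Qg where "Qg = (\<integral>\<^sup>+ z. ennreal (- g z) \<partial>M)"
  define P where "P j = (\<integral>\<^sup>+ z. ennreal (f j z) \<partial>M)" for j
  define Q where "Q j = (\<integral>\<^sup>+ z. ennreal (- f j z) \<partial>M)" for j
  have eq: "Pg + (\<Sum>j\<in>J. Q j) = Qg + (\<Sum>j\<in>J. P j)"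
  proof -
    have "Pg + (\<Sum>j\<in>J. Q j) = (\<integral>\<^sup>+ z. ennreal (g z) + (\<Sum>j\<in>J. ennreal (- f j z)) \<partial>M)"
      unfolding Pg_def Q_def using gm fm
      by (subst nn_integral_add) (auto simp: nn_integral_sum)
    also have "\<dots> = (\<integral>\<^sup>+ z. ennreal (- g z) + (\<Sum>j\<in>J. ennreal (f j z)) \<partial>M)"
      by (rule nn_integral_cong_AE) (use ae in \<open>auto intro: real_pm_identity[OF fin]\<close>)
    also have "\<dots> = Qg + (\<Sum>j\<in>J. P j)"
      unfolding Qg_def P_def using gm fm
      by (subst nn_integral_add) (auto simp: nn_integral_sum)
    finally show ?thesis .
  qed
  have Pfin: "(\<Sum>j\<in>J. P j) < \<infinity>" using pos fin unfolding P_def by (simp add: less_top)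
  have "Pg \<le> (\<integral>\<^sup>+ z. (\<Sum>j\<in>J. ennreal (f j z)) \<partial>M)"
    unfolding Pg_def
  proof (rule nn_integral_mono_AE)
    show "AE z in M. ennreal (g z) \<le> (\<Sum>j\<in>J. ennreal (f j z))"
      using ae
    proof eventually_elim
      case (elim z)
      have "ennreal (g z) \<le> ennreal (\<Sum>j\<in>J. max (f j z) 0)"
        using elim by (auto intro!: ennreal_leI sum_mono)
      also have "\<dots> = (\<Sum>j\<in>J. ennreal (max (f j z) 0))" by (rule sum_ennreal[symmetric]) simp
      also have "\<dots> = (\<Sum>j\<in>J. ennreal (f j z))"
        by (intro sum.cong refl) (metis ennreal_neg max.absorb1 max.absorb2 nle_le)
      finally show ?case .
    qed
  qed
  also have "\<dots> = (\<Sum>j\<in>J. P j)" unfolding P_def using fm by (simp add: nn_integral_sum)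
  finally have Pgfin: "Pg < \<infinity>" using Pfin by auto
  have Pjfin: "\<And>j. j \<in> J \<Longrightarrow> P j < \<infinity>" using pos unfolding P_def by auto
  have lhs: "eexpect M g = enn2ereal Pg - enn2ereal Qg" unfolding eexpect_def Pg_def Qg_def ..
  have rhs: "(\<Sum>j\<in>J. eexpect M (f j)) = (\<Sum>j\<in>J. enn2ereal (P j) - enn2ereal (Q j))"
    unfolding eexpect_def P_def Q_def ..
  show ?thesis
  proof (cases "\<forall>j\<in>J. Q j < \<infinity>")
    case True
    then have Qfin: "(\<Sum>j\<in>J. Q j) < \<infinity>" using fin by (simp add: less_top)
    have Qgfin: "Qg < \<infinity>" using eq Pgfin Qfin
      by (metis ennreal_add_eq_top infinity_ennreal_def less_top)
    define r where "r x = enn2real x" for x :: ennreal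
    have R: "\<And>x. x < \<infinity> \<Longrightarrow> enn2ereal x = ereal (r x) \<and> x = ennreal (r x) \<and> r x \<ge> 0"
      unfolding r_def by (metis enn2ereal_ennreal enn2real_nonneg ennreal_enn2real infinity_ennreal_def)
    have eqr: "r Pg + (\<Sum>j\<in>J. r (Q j)) = r Qg + (\<Sum>j\<in>J. r (P j))"
    proof -
      have "ennreal (r Pg + (\<Sum>j\<in>J. r (Q j))) = ennreal (r Qg + (\<Sum>j\<in>J. r (P j)))"
      proof -
        have sQ: "ennreal (\<Sum>j\<in>J. r (Q j)) = (\<Sum>j\<in>J. Q j)"
        proof -
          have "(\<Sum>j\<in>J. Q j) = (\<Sum>j\<in>J. ennreal (r (Q j)))" using R True by (intro sum.cong) auto
          also have "\<dots> = ennreal (\<Sum>j\<in>J. r (Q j))" using R True by (intro sum_ennreal) auto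
          finally show ?thesis by simp
        qed
        have sP: "ennreal (\<Sum>j\<in>J. r (P j)) = (\<Sum>j\<in>J. P j)"
        proof -
          have "(\<Sum>j\<in>J. P j) = (\<Sum>j\<in>J. ennreal (r (P j)))" using R Pjfin by (intro sum.cong) auto
          also have "\<dots> = ennreal (\<Sum>j\<in>J. r (P j))" using R Pjfin by (intro sum_ennreal) auto
          finally show ?thesis by simp
        qed
        have "ennreal (r Pg + (\<Sum>j\<in>J. r (Q j))) = Pg + (\<Sum>j\<in>J. Q j)"
          using R[OF Pgfin] R True sQ by (subst ennreal_plus) (auto intro: sum_nonneg)
        also note eq
        also have "Qg + (\<Sum>j\<in>J. P j) = ennreal (r Qg + (\<Sum>j\<in>J. r (P j)))"
          using R[OF Qgfin] R Pjfin sP by (subst ennreal_plus) (auto intro: sum_nonneg)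
        finally show ?thesis .
      qed
      then show ?thesis
        using R[OF Pgfin] R[OF Qgfin] R True Pjfin
        by (subst (asm) ennreal_inj) (auto intro!: add_nonneg_nonneg sum_nonneg)
    qed
    have "(\<Sum>j\<in>J. enn2ereal (P j) - enn2ereal (Q j)) = (\<Sum>j\<in>J. ereal (r (P j) - r (Q j)))"
      using R True Pjfin by (intro sum.cong) auto
    also have "\<dots> = ereal (r Pg - r Qg)" using eqr
      by (simp add: sum_subtractf algebra_simps)
    finally show ?thesis using lhs rhs R[OF Pgfin] R[OF Qgfin] by simp
  next
    case False
    then obtain k where k: "k \<in> J" "Q k = \<infinity>" using less_top by auto
    have "(\<Sum>j\<in>J. Q j) = \<infinity>" using k fin
      by (metis ennreal_sum_less_top infinity_ennreal_def less_top)
    then have "Qg = \<infinity>" using eq Pfin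
      by (metis ennreal_add_eq_top infinity_ennreal_def less_top top_neq_ennreal)
    then have L: "eexpect M g = - \<infinity>" using lhs fin_minus_top[OF Pgfin, of Qg] by (simp add: infinity_ennreal_def)
    define t where "t j = enn2ereal (P j) - enn2ereal (Q j)" for j
    have tk: "t k = - \<infinity>" unfolding t_def using k fin_minus_top[OF Pjfin[OF k(1)], of "Q k"] by simp
    have tle: "t j \<le> enn2ereal (P j)" for j unfolding t_def
      using enn2ereal_nonneg[of "Q j"] enn2ereal_nonneg[of "P j"]
      by (cases "enn2ereal (P j)"; cases "enn2ereal (Q j)") auto
    have "(\<Sum>j\<in>J - {k}. t j) \<le> (\<Sum>j\<in>J - {k}. enn2ereal (P j))" by (rule sum_mono) (rule tle)
    moreover have "(\<Sum>j\<in>J - {k}. enn2ereal (P j)) \<noteq> \<infinity>"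
      using Pjfin fin by (subst sum_Pinfty) (auto dest: Pjfin)
    ultimately have ne: "(\<Sum>j\<in>J - {k}. t j) \<noteq> \<infinity>" by (metis ereal_infty_less_eq(1))
    have "(\<Sum>j\<in>J. t j) = t k + (\<Sum>j\<in>J - {k}. t j)" using k fin by (simp add: sum.remove)
    also have "\<dots> = - \<infinity>" using tk ne by simp
    finally have S: "(\<Sum>j\<in>J. t j) = - \<infinity>" .
    have rt: "(\<Sum>j\<in>J. enn2ereal (P j) - enn2ereal (Q j)) = (\<Sum>j\<in>J. t j)" unfolding t_def ..
    show ?thesis by (simp only: L rhs rt S)
  qed
qed



locale bicm =
  fixes X :: "'x set" and m :: nat and mu :: "(nat \<Rightarrow> bool) \<Rightarrow> 'x"
    and PB :: "nat \<Rightarrow> bool pmf" and N :: "'y measure" and W :: "'x \<Rightarrow> 'y \<Rightarrow> real"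
  assumes lab: "bij_betw mu (bitvecs m) X"
    and sf: "sigma_finite_measure N"
    and W_meas: "\<And>x. x \<in> X \<Longrightarrow> W x \<in> borel_measurable N"
    and W_nonneg: "\<And>x y. x \<in> X \<Longrightarrow> y \<in> space N \<Longrightarrow> 0 \<le> W x y"
    and W_prob: "\<And>x. x \<in> X \<Longrightarrow> (\<integral>\<^sup>+ y. ennreal (W x y) \<partial>N) = 1"
begin

abbreviation "P x \<equiv> PXbicm m mu PB x"
abbreviation "lb j x \<equiv> lbit m mu j x"
abbreviation "q j b y \<equiv> qbit X m mu PB W j b y"

lemma bitvecs_PiE: "bitvecs m = PiE {1..m} (\<lambda>_. UNIV)"
  unfolding bitvecs_def ..

lemma fin_bitvecs: "finite (bitvecs m)"
  unfolding bitvecs_PiE by (intro finite_PiE) auto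

lemma finX: "finite X"
  using lab fin_bitvecs bij_betw_finite by blast

lemma lbit_mu: "v \<in> bitvecs m \<Longrightarrow> lb j (mu v) = v j"
  unfolding lbit_def using lab by (simp add: bij_betw_def the_inv_into_f_f)

lemma sum_X: "(\<Sum>x\<in>X. f x) = (\<Sum>v\<in>bitvecs m. f (mu v))"
  using lab by (simp add: sum.reindex_bij_betw)

lemma sum_prod_X:
  fixes g :: "nat \<Rightarrow> bool \<Rightarrow> real"
  shows "(\<Sum>x\<in>X. \<Prod>i\<in>{1..m}. g i (lb i x)) = (\<Prod>i\<in>{1..m}. \<Sum>c\<in>UNIV. g i c)"
proof -
  have "(\<Sum>x\<in>X. \<Prod>i\<in>{1..m}. g i (lb i x)) = (\<Sum>v\<in>bitvecs m. \<Prod>i\<in>{1..m}. g i (v i))"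
    unfolding sum_X by (intro sum.cong refl prod.cong) (auto simp: lbit_mu)
  also have "\<dots> = (\<Prod>i\<in>{1..m}. \<Sum>c\<in>UNIV. g i c)"
    unfolding bitvecs_PiE using prod_sum_PiE[of "{1..m}" "\<lambda>_. UNIV" g] by simp
  finally show ?thesis .
qed

lemma P_nonneg: "P x \<ge> 0"
  unfolding PXbicm_def by (intro prod_nonneg) auto

lemma pmf_sum1: "(\<Sum>c\<in>UNIV. pmf (PB i) c) = 1"
  by (rule sum_pmf_eq_1) auto

lemma marginal:
  assumes j: "j \<in> {1..m}"
  shows "(\<Sum>x\<in>Xbj X m mu j b. P x) = pmf (PB j) b"
proof -
  define g where "g i c = pmf (PB i) c * (if i = j \<and> c \<noteq> b then 0 else 1)" for i c
  have "(\<Sum>x\<in>Xbj X m mu j b. P x) = (\<Sum>x\<in>X. if lb j x = b then P x else 0)"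
    unfolding Xbj_def using finX by (simp add: sum.inter_filter)
  also have "\<dots> = (\<Sum>x\<in>X. \<Prod>i\<in>{1..m}. g i (lb i x))"
  proof (intro sum.cong refl)
    fix x
    have "(\<Prod>i\<in>{1..m}. g i (lb i x)) = P x * (\<Prod>i\<in>{1..m}. (if i = j \<and> lb i x \<noteq> b then 0 else 1))"
      unfolding g_def PXbicm_def by (simp add: prod.distrib)
    also have "(\<Prod>i\<in>{1..m}. (if i = j \<and> lb i x \<noteq> b then 0 else 1)) = (if lb j x = b then 1 else (0::real))"
      using j by (auto intro!: prod.neutral)
    finally show "(if lb j x = b then P x else 0) = (\<Prod>i\<in>{1..m}. g i (lb i x))" by simp
  qed
  also have "\<dots> = (\<Prod>i\<in>{1..m}. \<Sum>c\<in>UNIV. g i c)" by (rule sum_prod_X)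
  also have "\<dots> = (\<Prod>i\<in>{1..m}. if i = j then pmf (PB j) b else 1)"
  proof (intro prod.cong refl)
    fix i
    show "(\<Sum>c\<in>UNIV. g i c) = (if i = j then pmf (PB j) b else 1)"
    proof (cases "i = j")
      case True
      then show ?thesis unfolding g_def UNIV_bool by (cases b) auto
    next
      case False
      then show ?thesis unfolding g_def using pmf_sum1[of i] by simp
    qed
  qed
  also have "\<dots> = pmf (PB j) b" using j by (simp add: prod.delta)
  finally show ?thesis .
qed

lemma pmf_Pbit:
  assumes j: "j \<in> {1..m}"
  shows "pmf (PB j) b * Pbit X m mu PB W j b y = q j b y"
proof (cases "pmf (PB j) b = 0")
  case True
  have "q j b y = 0"
    unfolding qbit_def
  proof (intro sum.neutral ballI)
    fix x assume "x \<in> Xbj X m mu j b"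
    then have "lb j x = b" unfolding Xbj_def by auto
    then have "P x = 0" unfolding PXbicm_def using j True by (intro prod_zero) auto
    then show "W x y * P x = 0" by simp
  qed
  then show ?thesis using True by simp
next
  case False
  then show ?thesis
    unfolding Pbit_def qbit_def marginal[OF j] by (simp add: sum_divide_distrib[symmetric])
qed

lemma q_meas[measurable]: "(\<lambda>y. q j b y) \<in> borel_measurable N"
  unfolding qbit_def by (intro borel_measurable_sum borel_measurable_times borel_measurable_const)
    (auto simp: Xbj_def intro: W_meas)

lemma q_nonneg: "y \<in> space N \<Longrightarrow> q j b y \<ge> 0"
  unfolding qbit_def Xbj_def by (intro sum_nonneg mult_nonneg_nonneg W_nonneg P_nonneg) auto


lemma denom:
  "(\<Sum>x'\<in>X. qbicm X m mu PB W x' y powr s * P x') = (\<Prod>j\<in>{1..m}. \<Sum>b'\<in>UNIV. q j b' y powr s * pmf (PB j) b')"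
proof -
  have "(\<Sum>x'\<in>X. qbicm X m mu PB W x' y powr s * P x') = (\<Sum>x'\<in>X. \<Prod>j\<in>{1..m}. q j (lb j x') y powr s * pmf (PB j) (lb j x'))"
    unfolding qbicm_def PXbicm_def by (simp add: prod_powr_distrib prod.distrib)
  also have "\<dots> = (\<Prod>j\<in>{1..m}. \<Sum>b'\<in>UNIV. q j b' y powr s * pmf (PB j) b')"
    by (rule sum_prod_X)
  finally show ?thesis .
qed

lemma meas_symX:
  assumes "\<And>x. x \<in> X \<Longrightarrow> (\<lambda>y. f (x, y)) \<in> borel_measurable N"
  shows "f \<in> borel_measurable (count_space X \<Otimes>\<^sub>M N)"
  by (rule measurable_pair_measure_countable1) (use assms finX countable_finite in auto)

lemma meas_bool:
  assumes "\<And>b. (\<lambda>y. f (b, y)) \<in> borel_measurable N"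
  shows "f \<in> borel_measurable (count_space (UNIV::bool set) \<Otimes>\<^sub>M N)"
  by (rule measurable_pair_measure_countable1) (use assms in auto)

lemma Pbit_meas[measurable]: "(\<lambda>y. Pbit X m mu PB W j b y) \<in> borel_measurable N"
  unfolding Pbit_def by (intro borel_measurable_sum borel_measurable_divide borel_measurable_times borel_measurable_const)
    (auto simp: Xbj_def intro: W_meas)

lemma dens_sym_meas: "(\<lambda>(x,y). ennreal (P x * W x y)) \<in> borel_measurable (count_space X \<Otimes>\<^sub>M N)"
proof (rule meas_symX)
  fix x assume x: "x \<in> X"
  note [measurable] = W_meas[OF x]
  show "(\<lambda>y. case (x, y) of (x, y) \<Rightarrow> ennreal (P x * W x y)) \<in> borel_measurable N" by simp
qed

lemma dens_bit_meas: "(\<lambda>(b,y). ennreal (pmf (PB j) b * Pbit X m mu PB W j b y)) \<in> borel_measurable (count_space UNIV \<Otimes>\<^sub>M N)"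
  by (rule meas_bool) simp

end

context bicm begin

lemma sum_split_bits:
  fixes h :: "'x \<Rightarrow> ennreal"
  shows "(\<Sum>x\<in>X. h x) = (\<Sum>b\<in>UNIV. \<Sum>x\<in>Xbj X m mu j b. h x)"
  unfolding Xbj_def using sum.group[OF finX, of UNIV "lb j" h] by simp

lemma transfer:
  assumes j: "j \<in> {1..m}" and phi: "\<And>b. (\<lambda>y. phi (b, y)) \<in> borel_measurable N"
  shows "(\<integral>\<^sup>+ z. ennreal (phi z) \<partial>joint_bit X m mu PB W N j)
       = (\<integral>\<^sup>+ z. ennreal (phi (lb j (fst z), snd z)) \<partial>joint_sym X m mu PB W N)"
proof -
  have "(\<integral>\<^sup>+ z. ennreal (phi z) \<partial>joint_bit X m mu PB W N j)
      = (\<integral>\<^sup>+ z. (\<lambda>(b,y). ennreal (pmf (PB j) b * Pbit X m mu PB W j b y)) z * ennreal (phi z) \<partial>(count_space UNIV \<Otimes>\<^sub>M N))"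
    unfolding joint_bit_def
    by (rule nn_integral_density[OF dens_bit_meas]) (rule meas_bool, use phi in simp)
  also have "\<dots> = (\<Sum>b\<in>UNIV. \<integral>\<^sup>+ y. ennreal (pmf (PB j) b * Pbit X m mu PB W j b y) * ennreal (phi (b, y)) \<partial>N)"
    by (subst nn_pair_count[OF _ sf]) (use phi in simp_all)
  also have "\<dots> = (\<Sum>b\<in>UNIV. \<integral>\<^sup>+ y. ennreal (q j b y) * ennreal (phi (b, y)) \<partial>N)"
    by (simp add: pmf_Pbit[OF j])
  finally have L: "(\<integral>\<^sup>+ z. ennreal (phi z) \<partial>joint_bit X m mu PB W N j) = \<dots>" .
  have "(\<integral>\<^sup>+ z. ennreal (phi (lb j (fst z), snd z)) \<partial>joint_sym X m mu PB W N)
      = (\<integral>\<^sup>+ z. (\<lambda>(x,y). ennreal (P x * W x y)) z * ennreal (phi (lb j (fst z), snd z)) \<partial>(count_space X \<Otimes>\<^sub>M N))"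
    unfolding joint_sym_def
    by (rule nn_integral_density[OF dens_sym_meas]) (rule meas_symX, use phi in simp)
  also have "\<dots> = (\<Sum>x\<in>X. \<integral>\<^sup>+ y. ennreal (P x * W x y) * ennreal (phi (lb j x, y)) \<partial>N)"
  proof (subst nn_pair_count[OF finX sf])
    fix x assume x: "x \<in> X"
    note [measurable] = W_meas[OF x]
    have [measurable]: "(\<lambda>y. phi (lb j x, y)) \<in> borel_measurable N" by (rule phi)
    show "(\<lambda>y. (case (x, y) of (x, y) \<Rightarrow> ennreal (P x * W x y)) * ennreal (phi (lb j (fst (x, y)), snd (x, y)))) \<in> borel_measurable N"
      by simp
  qed simp
  also have "\<dots> = (\<Sum>b\<in>UNIV. \<Sum>x\<in>Xbj X m mu j b. \<integral>\<^sup>+ y. ennreal (P x * W x y) * ennreal (phi (lb j x, y)) \<partial>N)"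
    by (rule sum_split_bits)
  also have "\<dots> = (\<Sum>b\<in>UNIV. \<integral>\<^sup>+ y. ennreal (q j b y) * ennreal (phi (b, y)) \<partial>N)"
  proof (intro sum.cong refl)
    fix b
    have "(\<Sum>x\<in>Xbj X m mu j b. \<integral>\<^sup>+ y. ennreal (P x * W x y) * ennreal (phi (lb j x, y)) \<partial>N)
        = (\<Sum>x\<in>Xbj X m mu j b. \<integral>\<^sup>+ y. ennreal (P x * W x y) * ennreal (phi (b, y)) \<partial>N)"
      by (intro sum.cong refl) (auto simp: Xbj_def)
    also have "\<dots> = (\<integral>\<^sup>+ y. (\<Sum>x\<in>Xbj X m mu j b. ennreal (P x * W x y) * ennreal (phi (b, y))) \<partial>N)"
    proof (rule nn_integral_sum[symmetric])
      fix x assume x: "x \<in> Xbj X m mu j b"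
      then have x': "x \<in> X" by (simp add: Xbj_def)
      note [measurable] = W_meas[OF x']
      have [measurable]: "(\<lambda>y. phi (b, y)) \<in> borel_measurable N" by (rule phi)
      show "(\<lambda>y. ennreal (P x * W x y) * ennreal (phi (b, y))) \<in> borel_measurable N" by simp
    qed
    also have "\<dots> = (\<integral>\<^sup>+ y. ennreal (q j b y) * ennreal (phi (b, y)) \<partial>N)"
    proof (rule nn_integral_cong)
      fix y assume y: "y \<in> space N"
      have "(\<Sum>x\<in>Xbj X m mu j b. ennreal (P x * W x y)) = ennreal (\<Sum>x\<in>Xbj X m mu j b. P x * W x y)"
        by (rule sum_ennreal) (use y in \<open>auto simp: Xbj_def intro!: mult_nonneg_nonneg P_nonneg W_nonneg\<close>)
      also have "(\<Sum>x\<in>Xbj X m mu j b. P x * W x y) = q j b y"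
        unfolding qbit_def by (simp add: mult.commute)
      finally show "(\<Sum>x\<in>Xbj X m mu j b. ennreal (P x * W x y) * ennreal (phi (b, y))) = ennreal (q j b y) * ennreal (phi (b, y))"
        by (simp add: sum_distrib_right[symmetric])
    qed
    finally show "(\<Sum>x\<in>Xbj X m mu j b. \<integral>\<^sup>+ y. ennreal (P x * W x y) * ennreal (phi (lb j x, y)) \<partial>N)
        = (\<integral>\<^sup>+ y. ennreal (q j b y) * ennreal (phi (b, y)) \<partial>N)" .
  qed
  finally show ?thesis using L by simp
qed

lemma transfer_eexpect:
  assumes j: "j \<in> {1..m}" and phi: "\<And>b. (\<lambda>y. phi (b, y)) \<in> borel_measurable N"
  shows "eexpect (joint_bit X m mu PB W N j) phi
       = eexpect (joint_sym X m mu PB W N) (\<lambda>z. phi (lb j (fst z), snd z))"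
proof -
  have phi': "\<And>b. (\<lambda>y. - phi (b, y)) \<in> borel_measurable N" using phi by simp
  show ?thesis unfolding eexpect_def
    using transfer[OF j phi] transfer[OF j phi', of ] by simp
qed

end

context bicm begin

lemma qbicm_meas[measurable]: "(\<lambda>y. qbicm X m mu PB W x y) \<in> borel_measurable N"
  unfolding qbicm_def by (intro borel_measurable_prod) simp

lemma pos_facts:
  assumes x: "x \<in> X" and y: "y \<in> space N" and pos: "0 < P x * W x y" and i: "i \<in> {1..m}"
  shows "0 < pmf (PB i) (lb i x)" "0 < q i (lb i x) y"
    "q i (lb i x) y powr s * pmf (PB i) (lb i x) \<le> (\<Sum>b'\<in>UNIV. q i b' y powr s * pmf (PB i) b')"
proof -
  have Px: "P x > 0" and Wx: "W x y > 0"
    using pos P_nonneg[of x] W_nonneg[OF x y] by (auto simp: zero_less_mult_iff)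
  show pm: "0 < pmf (PB i) (lb i x)"
  proof (rule ccontr)
    assume "\<not> 0 < pmf (PB i) (lb i x)"
    then have "pmf (PB i) (lb i x) = 0" using pmf_nonneg[of "PB i"] by (metis less_eq_real_def)
    then have "P x = 0" unfolding PXbicm_def using i by (intro prod_zero) auto
    then show False using Px by simp
  qed
  have "W x y * P x \<le> q i (lb i x) y"
    unfolding qbit_def
    by (rule member_le_sum) (use x finX in \<open>auto simp: Xbj_def intro!: mult_nonneg_nonneg W_nonneg[OF _ y] P_nonneg\<close>)
  then show "0 < q i (lb i x) y" using Px Wx by (smt (verit) mult_pos_pos)
  show "q i (lb i x) y powr s * pmf (PB i) (lb i x) \<le> (\<Sum>b'\<in>UNIV. q i b' y powr s * pmf (PB i) b')"
    by (rule member_le_sum) auto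
qed

lemma pointwise:
  assumes x: "x \<in> X" and y: "y \<in> space N" and pos: "0 < P x * W x y"
  shows "ln (qbicm X m mu PB W x y powr s / (\<Sum>x'\<in>X. qbicm X m mu PB W x' y powr s * P x'))
       = (\<Sum>j\<in>{1..m}. ln (q j (lb j x) y powr s / (\<Sum>b'\<in>UNIV. q j b' y powr s * pmf (PB j) b')))"
proof -
  have nz: "q j (lb j x) y powr s / (\<Sum>b'\<in>UNIV. q j b' y powr s * pmf (PB j) b') \<noteq> 0" if j: "j \<in> {1..m}" for j
  proof -
    have "0 < q j (lb j x) y powr s" using pos_facts(2)[OF x y pos j] by simp
    moreover have "0 < q j (lb j x) y powr s * pmf (PB j) (lb j x)"
      using pos_facts(1,2)[OF x y pos j] by simp
    then have "0 < (\<Sum>b'\<in>UNIV. q j b' y powr s * pmf (PB j) b')"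
      using pos_facts(3)[OF x y pos j, of s] by linarith
    ultimately show ?thesis by simp
  qed
  have "qbicm X m mu PB W x y powr s / (\<Sum>x'\<in>X. qbicm X m mu PB W x' y powr s * P x')
      = (\<Prod>j\<in>{1..m}. q j (lb j x) y powr s) / (\<Prod>j\<in>{1..m}. \<Sum>b'\<in>UNIV. q j b' y powr s * pmf (PB j) b')"
    unfolding denom by (simp add: qbicm_def prod_powr_distrib)
  also have "\<dots> = (\<Prod>j\<in>{1..m}. q j (lb j x) y powr s / (\<Sum>b'\<in>UNIV. q j b' y powr s * pmf (PB j) b'))"
    by (rule prod_dividef[symmetric])
  finally have R: "qbicm X m mu PB W x y powr s / (\<Sum>x'\<in>X. qbicm X m mu PB W x' y powr s * P x')
      = (\<Prod>j\<in>{1..m}. q j (lb j x) y powr s / (\<Sum>b'\<in>UNIV. q j b' y powr s * pmf (PB j) b'))" .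
  show ?thesis unfolding R by (rule ln_prod) (simp, rule nz)
qed

lemma H_bound:
  assumes x: "x \<in> X" and y: "y \<in> space N" and pos: "0 < P x * W x y" and j: "j \<in> {1..m}"
  shows "ln (q j (lb j x) y powr s / (\<Sum>b'\<in>UNIV. q j b' y powr s * pmf (PB j) b')) \<le> - ln (pmf (PB j) (lb j x))"
proof -
  define Q where "Q = q j (lb j x) y powr s"
  define D where "D = (\<Sum>b'\<in>UNIV. q j b' y powr s * pmf (PB j) b')"
  define p where "p = pmf (PB j) (lb j x)"
  have p: "0 < p" unfolding p_def using pos_facts(1)[OF x y pos j] .
  have Q: "0 < Q" unfolding Q_def using pos_facts(2)[OF x y pos j] by simp
  have QD: "Q * p \<le> D" unfolding Q_def D_def p_def using pos_facts(3)[OF x y pos j] .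
  have D: "0 < D" using QD Q p by (smt (verit) mult_pos_pos)
  have "Q / D \<le> 1 / p" using QD p D Q by (simp add: field_simps)
  moreover have "0 < Q / D" using Q D by simp
  ultimately have l1: "ln (Q / D) \<le> ln (1 / p)" using p by simp
  have l2: "ln (1 / p) = - ln p" using p by (simp add: ln_div)
  show ?thesis using l1 l2 unfolding Q_def D_def p_def by linarith
qed

lemma H_meas: "(\<lambda>(x,y). ln (q j (lb j x) y powr s / (\<Sum>b'\<in>UNIV. q j b' y powr s * pmf (PB j) b')))
   \<in> borel_measurable (count_space X \<Otimes>\<^sub>M N)"
  by (rule meas_symX) simp

lemma F_meas: "(\<lambda>(x,y). ln (qbicm X m mu PB W x y powr s / (\<Sum>x'\<in>X. qbicm X m mu PB W x' y powr s * P x')))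
   \<in> borel_measurable (count_space X \<Otimes>\<^sub>M N)"
  by (rule meas_symX) simp

lemma H_fin:
  assumes j: "j \<in> {1..m}"
  shows "(\<integral>\<^sup>+ z. ennreal ((\<lambda>(x,y). ln (q j (lb j x) y powr s / (\<Sum>b'\<in>UNIV. q j b' y powr s * pmf (PB j) b'))) z)
     \<partial>joint_sym X m mu PB W N) < \<infinity>"
proof -
  let ?H = "\<lambda>(x,y). ln (q j (lb j x) y powr s / (\<Sum>b'\<in>UNIV. q j b' y powr s * pmf (PB j) b'))"
  define c where "c x = - ln (pmf (PB j) (lb j x))" for x
  have Hm: "(\<lambda>z. ennreal (?H z)) \<in> borel_measurable (count_space X \<Otimes>\<^sub>M N)"
    using H_meas[of j s] by measurable
  have "(\<integral>\<^sup>+ z. ennreal (?H z) \<partial>joint_sym X m mu PB W N)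
      = (\<integral>\<^sup>+ z. (\<lambda>(x,y). ennreal (P x * W x y)) z * ennreal (?H z) \<partial>(count_space X \<Otimes>\<^sub>M N))"
    unfolding joint_sym_def by (rule nn_integral_density[OF dens_sym_meas Hm])
  also have "\<dots> \<le> (\<integral>\<^sup>+ z. (\<lambda>(x,y). ennreal (P x * W x y) * ennreal (c x)) z \<partial>(count_space X \<Otimes>\<^sub>M N))"
  proof (rule nn_integral_mono)
    fix z assume "z \<in> space (count_space X \<Otimes>\<^sub>M N)"
    then obtain x y where z: "z = (x, y)" and x: "x \<in> X" and y: "y \<in> space N"
      by (auto simp: space_pair_measure)
    show "(\<lambda>(x,y). ennreal (P x * W x y)) z * ennreal (?H z) \<le> (\<lambda>(x,y). ennreal (P x * W x y) * ennreal (c x)) z"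
    proof (cases "0 < P x * W x y")
      case True
      have "ennreal (?H (x,y)) \<le> ennreal (c x)"
        unfolding c_def using H_bound[OF x y True j, of s] by (auto intro: ennreal_leI)
      then show ?thesis unfolding z by (auto intro: mult_left_mono)
    next
      case False
      then have "P x * W x y \<le> 0" by simp
      then show ?thesis unfolding z by (simp add: ennreal_neg)
    qed
  qed
  also have "\<dots> = (\<Sum>x\<in>X. \<integral>\<^sup>+ y. ennreal (P x * W x y) * ennreal (c x) \<partial>N)"
  proof (subst nn_pair_count[OF finX sf])
    fix x assume x: "x \<in> X"
    note [measurable] = W_meas[OF x]
    show "(\<lambda>y. (case (x, y) of (x, y) \<Rightarrow> ennreal (P x * W x y) * ennreal (c x))) \<in> borel_measurable N"
      by simp
  qed simp
  also have "\<dots> = (\<Sum>x\<in>X. ennreal (P x) * ennreal (c x))"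
  proof (intro sum.cong refl)
    fix x assume x: "x \<in> X"
    note [measurable] = W_meas[OF x]
    have "(\<integral>\<^sup>+ y. ennreal (P x * W x y) * ennreal (c x) \<partial>N) = (\<integral>\<^sup>+ y. (ennreal (P x) * ennreal (c x)) * ennreal (W x y) \<partial>N)"
      by (rule nn_integral_cong) (simp add: ennreal_mult P_nonneg W_nonneg[OF x] ac_simps)
    also have "\<dots> = ennreal (P x) * ennreal (c x) * (\<integral>\<^sup>+ y. ennreal (W x y) \<partial>N)"
      by (rule nn_integral_cmult) simp
    finally show "(\<integral>\<^sup>+ y. ennreal (P x * W x y) * ennreal (c x) \<partial>N) = ennreal (P x) * ennreal (c x)"
      using W_prob[OF x] by simp
  qed
  also have "\<dots> < \<infinity>"
  proof -
    have "\<forall>x\<in>X. ennreal (P x) * ennreal (c x) < top"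
      by (simp add: ennreal_mult_less_top)
    then show ?thesis using finX by (simp add: infinity_ennreal_def)
  qed
  finally show ?thesis .
qed

lemma main_s:
  "eexpect (joint_sym X m mu PB W N)
      (\<lambda>(x,y). ln (qbicm X m mu PB W x y powr s / (\<Sum>x'\<in>X. qbicm X m mu PB W x' y powr s * P x')))
   = (\<Sum>j\<in>{1..m}. eexpect (joint_sym X m mu PB W N)
         (\<lambda>(x,y). ln (q j (lb j x) y powr s / (\<Sum>b'\<in>UNIV. q j b' y powr s * pmf (PB j) b'))))"
proof (rule eexpect_sum)
  show "(\<lambda>(x,y). ln (qbicm X m mu PB W x y powr s / (\<Sum>x'\<in>X. qbicm X m mu PB W x' y powr s * P x')))
     \<in> borel_measurable (joint_sym X m mu PB W N)"
    unfolding joint_sym_def using F_meas by simp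
  show "(\<lambda>(x,y). ln (q j (lb j x) y powr s / (\<Sum>b'\<in>UNIV. q j b' y powr s * pmf (PB j) b')))
     \<in> borel_measurable (joint_sym X m mu PB W N)" for j
    unfolding joint_sym_def using H_meas by simp
  show "AE z in joint_sym X m mu PB W N.
     (\<lambda>(x,y). ln (qbicm X m mu PB W x y powr s / (\<Sum>x'\<in>X. qbicm X m mu PB W x' y powr s * P x'))) z
     = (\<Sum>j\<in>{1..m}. (\<lambda>(x,y). ln (q j (lb j x) y powr s / (\<Sum>b'\<in>UNIV. q j b' y powr s * pmf (PB j) b'))) z)"
    unfolding joint_sym_def AE_density[OF dens_sym_meas]
    by (intro AE_I2 impI) (auto simp: space_pair_measure pointwise)
qed (use H_fin in auto)

end

theorem theorem1:
  fixes X :: "'x set" and m :: nat and mu :: "(nat \<Rightarrow> bool) \<Rightarrow> 'x"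
    and PB :: "nat \<Rightarrow> bool pmf" and N :: "'y measure" and W :: "'x \<Rightarrow> 'y \<Rightarrow> real"
  assumes lab: "bij_betw mu (bitvecs m) X"
    and sf: "sigma_finite_measure N"
    and W_meas: "\<And>x. x \<in> X \<Longrightarrow> W x \<in> borel_measurable N"
    and W_nonneg: "\<And>x y. x \<in> X \<Longrightarrow> y \<in> space N \<Longrightarrow> 0 \<le> W x y"
    and W_prob: "\<And>x. x \<in> X \<Longrightarrow> (\<integral>\<^sup>+ y. ennreal (W x y) \<partial>N) = 1"
  shows "Rgmi X m mu PB W N =
      (SUP s\<in>{0<..}. (\<Sum>j\<in>{1..m}. eexpect (joint_bit X m mu PB W N j)
         (\<lambda>(b,y). ln (qbit X m mu PB W j b y powr s /
            (\<Sum>b'\<in>UNIV. qbit X m mu PB W j b' y powr s * pmf (PB j) b')))))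
   \<and> Rgmi X m mu PB W N =
      (SUP s\<in>{0<..}. (\<Sum>j\<in>{1..m}. eexpect (joint_sym X m mu PB W N)
         (\<lambda>(x,y). ln (qbit X m mu PB W j (lbit m mu j x) y powr s /
            (\<Sum>b'\<in>UNIV. qbit X m mu PB W j b' y powr s * pmf (PB j) b')))))"
proof -
  interpret bicm X m mu PB N W
    by (rule bicm.intro[OF lab sf W_meas W_nonneg W_prob])
  have c2: "Rgmi X m mu PB W N =
      (SUP s\<in>{0<..}. (\<Sum>j\<in>{1..m}. eexpect (joint_sym X m mu PB W N)
         (\<lambda>(x,y). ln (qbit X m mu PB W j (lbit m mu j x) y powr s /
            (\<Sum>b'\<in>UNIV. qbit X m mu PB W j b' y powr s * pmf (PB j) b')))))"
    unfolding Rgmi_def by (intro SUP_cong refl main_s)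
  have c1eq: "eexpect (joint_bit X m mu PB W N j)
         (\<lambda>(b,y). ln (qbit X m mu PB W j b y powr s /
            (\<Sum>b'\<in>UNIV. qbit X m mu PB W j b' y powr s * pmf (PB j) b')))
     = eexpect (joint_sym X m mu PB W N)
         (\<lambda>(x,y). ln (qbit X m mu PB W j (lbit m mu j x) y powr s /
            (\<Sum>b'\<in>UNIV. qbit X m mu PB W j b' y powr s * pmf (PB j) b')))"
    if j: "j \<in> {1..m}" for j s
  proof -
    have "eexpect (joint_bit X m mu PB W N j)
         (\<lambda>(b,y). ln (qbit X m mu PB W j b y powr s /
            (\<Sum>b'\<in>UNIV. qbit X m mu PB W j b' y powr s * pmf (PB j) b')))
      = eexpect (joint_sym X m mu PB W N) (\<lambda>z. (\<lambda>(b,y). ln (qbit X m mu PB W j b y powr s /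
            (\<Sum>b'\<in>UNIV. qbit X m mu PB W j b' y powr s * pmf (PB j) b'))) (lbit m mu j (fst z), snd z))"
      by (rule transfer_eexpect[OF j]) simp
    then show ?thesis by (simp add: case_prod_unfold)
  qed
  have "(SUP s\<in>{0<..}. (\<Sum>j\<in>{1..m}. eexpect (joint_bit X m mu PB W N j)
         (\<lambda>(b,y). ln (qbit X m mu PB W j b y powr s /
            (\<Sum>b'\<in>UNIV. qbit X m mu PB W j b' y powr s * pmf (PB j) b')))))
     = (SUP s\<in>{0<..}. (\<Sum>j\<in>{1..m}. eexpect (joint_sym X m mu PB W N)
         (\<lambda>(x,y). ln (qbit X m mu PB W j (lbit m mu j x) y powr s /
            (\<Sum>b'\<in>UNIV. qbit X m mu PB W j b' y powr s * pmf (PB j) b')))))"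
    by (intro SUP_cong refl sum.cong c1eq)
  then show ?thesis using c2 by simp
qed

end
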